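(* Let $G$ be a $3$-edge-colorable cubic graph of order $2n\geq 8$. Then $\chi'_{[n-1]}(G)=4$.
   Context: All graphs are finite, simple (no loops, no parallel edges), connected and cubic. For a positive integer $k$, a $[k]$-matching of $G$ is a matching of $G$ with exactly $k$ edges. The excessive $[k]$-index $\chi'_{[k]}(G)$ is the minimum number of $[k]$-matchings of $G$ whose union is $E(G)$; if some edge of $G$ lies in no $[k]$-matching, one sets $\chi'_{[k]}(G)=\infty$. *)

theory Defs
  imports Main "HOL-Library.Extended_Nat"
begin

definition simple_graph :: "'a set \<Rightarrow> 'a set set \<Rightarrow> bool" where
  "simple_graph V E \<longleftrightarrow> finite V \<and> (\<forall>e\<in>E. \<exists>u v. u \<in> V \<and> v \<in> V \<and> u \<noteq> v \<and> e = {u, v})"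

definition adjacent :: "'a set set \<Rightarrow> 'a \<Rightarrow> 'a \<Rightarrow> bool" where
  "adjacent E u v \<longleftrightarrow> {u, v} \<in> E"

definition connected_graph :: "'a set \<Rightarrow> 'a set set \<Rightarrow> bool" where
  "connected_graph V E \<longleftrightarrow> (\<forall>u\<in>V. \<forall>v\<in>V. (adjacent E)\<^sup>*\<^sup>* u v)"

definition degree :: "'a set set \<Rightarrow> 'a \<Rightarrow> nat" where
  "degree E v = card {e \<in> E. v \<in> e}"

definition cubic :: "'a set \<Rightarrow> 'a set set \<Rightarrow> bool" where
  "cubic V E \<longleftrightarrow> (\<forall>v\<in>V. degree E v = 3)"

definition cubic_graph :: "'a set \<Rightarrow> 'a set set \<Rightarrow> bool" where
  "cubic_graph V E \<longleftrightarrow> simple_graph V E \<and> connected_graph V E \<and> cubic V E"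

definition three_edge_colorable :: "'a set set \<Rightarrow> bool" where
  "three_edge_colorable E \<longleftrightarrow>
     (\<exists>c :: 'a set \<Rightarrow> nat. (\<forall>e\<in>E. c e < 3) \<and>
        (\<forall>e1\<in>E. \<forall>e2\<in>E. e1 \<noteq> e2 \<and> e1 \<inter> e2 \<noteq> {} \<longrightarrow> c e1 \<noteq> c e2))"

definition matching :: "'a set set \<Rightarrow> 'a set set \<Rightarrow> bool" where
  "matching E M \<longleftrightarrow> M \<subseteq> E \<and> (\<forall>e1\<in>M. \<forall>e2\<in>M. e1 \<noteq> e2 \<longrightarrow> e1 \<inter> e2 = {})"

definition k_matching :: "'a set set \<Rightarrow> nat \<Rightarrow> 'a set set \<Rightarrow> bool" where
  "k_matching E k M \<longleftrightarrow> matching E M \<and> card M = k"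

definition excessive_index :: "'a set set \<Rightarrow> nat \<Rightarrow> enat" where
  "excessive_index E k =
     (if \<forall>e\<in>E. \<exists>M. k_matching E k M \<and> e \<in> M
      then enat (LEAST t. \<exists>S. finite S \<and> card S = t \<and> (\<forall>M\<in>S. k_matching E k M) \<and> \<Union>S = E)
      else \<infinity>)"

end

theory Submission
  imports Defs
begin

locale cg =
  fixes V :: "'a set" and E :: "'a set set" and c :: "'a set \<Rightarrow> nat"
  assumes sg: "simple_graph V E" and cub: "cubic V E"
    and col: "\<forall>e\<in>E. c e < 3"
    and prp: "\<forall>e1\<in>E. \<forall>e2\<in>E. e1 \<noteq> e2 \<and> e1 \<inter> e2 \<noteq> {} \<longrightarrow> c e1 \<noteq> c e2"
begin

lemma finV: "finite V" using sg by (simp add: simple_graph_def)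
lemma edge: "e\<in>E \<Longrightarrow> \<exists>u v. u\<in>V \<and> v\<in>V \<and> u\<noteq>v \<and> e={u,v}"
  using sg by (simp add: simple_graph_def)
lemma edge_sub: "e\<in>E \<Longrightarrow> e \<subseteq> V" using edge by blast
lemma finE: "finite E"
proof -
  have "E \<subseteq> Pow V" using edge_sub by blast
  thus ?thesis using finite_subset[of E "Pow V"] finV by simp
qed
lemma edge_other: "e\<in>E \<Longrightarrow> u\<in>e \<Longrightarrow> \<exists>v. v\<in>V \<and> v\<noteq>u \<and> e={u,v}"
  using edge by fastforce
lemma uniq: "e1\<in>E \<Longrightarrow> e2\<in>E \<Longrightarrow> u\<in>e1 \<Longrightarrow> u\<in>e2 \<Longrightarrow> c e1 = c e2 \<Longrightarrow> e1 = e2"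
  using prp by blast
lemma col3: "e\<in>E \<Longrightarrow> c e = 0 \<or> c e = 1 \<or> c e = 2"
  using col by fastforce

lemma ex_col: "v\<in>V \<Longrightarrow> i<3 \<Longrightarrow> \<exists>e\<in>E. v\<in>e \<and> c e = i"
proof -
  assume v: "v\<in>V" and i: "i<3"
  let ?S = "{e\<in>E. v\<in>e}"
  have cS: "card ?S = 3" using cub v by (simp add: cubic_def degree_def)
  have inj: "inj_on c ?S" unfolding inj_on_def using prp by blast
  have "card (c ` ?S) = 3" using card_image[OF inj] cS by simp
  moreover have "c ` ?S \<subseteq> {..<3}" using col by auto
  ultimately have "c ` ?S = {..<3}" by (simp add: card_subset_eq)
  then have "i \<in> c ` ?S" using i by auto
  thus ?thesis by auto
qed

definition M where "M i = {e\<in>E. c e = i}"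

lemma M_match: "matching E (M i)" unfolding matching_def M_def using prp by blast
lemma finM: "finite (M i)" using finE unfolding M_def by simp

lemma card_M: "i<3 \<Longrightarrow> card V = 2*card (M i)"
proof -
  assume i: "i<3"
  have U: "\<Union>(M i) = V" using ex_col[OF _ i] edge_sub unfolding M_def by blast
  have pw: "pairwise disjnt (M i)" using M_match unfolding matching_def pairwise_def disjnt_def by blast
  have fe: "\<And>A. A\<in>M i \<Longrightarrow> finite A" using edge_sub finV unfolding M_def by (auto intro: finite_subset)
  have c2: "\<forall>A\<in>M i. card A = 2" using edge unfolding M_def by fastforce
  have "card V = sum card (M i)" using card_Union_disjoint[OF pw fe] U by simp
  also have "... = 2 * card (M i)" using c2 by simp
  finally show ?thesis .
qed

lemma card_E: "card E = card (M 0) + card (M 1) + card (M 2)"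
proof -
  have "E = M 0 \<union> M 1 \<union> M 2" using col3 unfolding M_def by auto
  moreover have "card (M 0 \<union> M 1 \<union> M 2) = card (M 0) + card (M 1) + card (M 2)"
  proof -
    have d1: "M 0 \<inter> M 1 = {}" "(M 0 \<union> M 1) \<inter> M 2 = {}" unfolding M_def by auto
    have "card (M 0 \<union> M 1 \<union> M 2) = card (M 0 \<union> M 1) + card (M 2)"
      by (rule card_Un_disjoint, auto simp: finE M_def)
    also have "card (M 0 \<union> M 1) = card (M 0) + card (M 1)"
      by (rule card_Un_disjoint, auto simp: finE M_def)
    finally show ?thesis .
  qed
  ultimately show ?thesis by simp
qed

lemma construct:
  assumes n: "card V = 2*n" "n \<ge> 4"
    and ijk: "i<3" "j<3" "k<3" "i\<noteq>j" "j\<noteq>k" "i\<noteq>k"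
    and fab: "f\<in>M i" "a\<in>M j" "b\<in>M k" "a\<inter>b={}" "f\<inter>a\<noteq>{}" "f\<inter>b\<noteq>{}"
  shows "\<exists>S. finite S \<and> card S \<le> 4 \<and> (\<forall>X\<in>S. k_matching E (n-1) X) \<and> \<Union>S = E"
proof -
  have cM: "card (M i) = n" "card (M j) = n" "card (M k) = n" using card_M[OF ijk(1)] card_M[OF ijk(2)] card_M[OF ijk(3)] n by simp_all
  have fE: "f\<in>E" "a\<in>E" "b\<in>E" and cf: "c f = i" "c a = j" "c b = k" using fab M_def by auto
  obtain x where x: "x\<in>f" "x\<in>a" using fab by blast
  obtain y where y: "y\<in>f" "y\<in>b" using fab by blast
  obtain x' where x': "a = {x,x'}" using edge_other[OF fE(2) x(2)] by blast
  obtain y' where y': "b = {y,y'}" using edge_other[OF fE(3) y(2)] by blast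
  define T where "T = {g\<in>M i. g \<inter> (a\<union>b) \<noteq> {}}"
  define U where "U v = {g\<in>M i. v\<in>g}" for v
  have TU: "T \<subseteq> {f} \<union> U x' \<union> U y'"
  proof
    fix g assume g: "g\<in>T"
    then have gE: "g\<in>E" "c g = i" using T_def M_def by auto
    from g obtain v where v: "v\<in>g" "v\<in>a\<union>b" using T_def by auto
    show "g \<in> {f} \<union> U x' \<union> U y'"
    proof (cases "v = x \<or> v = y")
      case True then have "v\<in>f" using x y by auto
      then have "g = f" using uniq[OF gE(1) fE(1) v(1)] gE cf by simp
      thus ?thesis by simp
    next
      case False then have "v = x' \<or> v = y'" using v x' y' by auto
      thus ?thesis using g v unfolding T_def U_def by auto
    qed
  qed
  have fU: "finite (U v)" for v using finM U_def by simp
  have U1: "card (U v) \<le> 1" for v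
  proof -
    have "finite (U v)" using finM U_def by simp
    moreover have "\<forall>g1\<in>U v. \<forall>g2\<in>U v. g1=g2" using uniq unfolding U_def M_def by blast
    ultimately show ?thesis using card_le_Suc0_iff_eq by auto
  qed
  have finT: "finite T" using finM T_def by simp
  have "card T \<le> card ({f} \<union> U x' \<union> U y')" using fU by (intro card_mono[OF _ TU]) simp
  moreover have "card ({f} \<union> U x' \<union> U y') \<le> card ({f} \<union> U x') + card (U y')" by (rule card_Un_le)
  moreover have "card ({f} \<union> U x') \<le> card {f} + card (U x')" by (rule card_Un_le)
  ultimately have cT: "card T \<le> 3" using U1[of x'] U1[of y'] by simp
  have TM: "T \<subseteq> M i" using T_def by auto
  have "card (M i - T) = n - card T" using card_Diff_subset[OF finT TM] cM by simp
  hence cR: "n - 3 \<le> card (M i - T)" using cT by simp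
  obtain N' where N': "N' \<subseteq> M i - T" "card N' = n-3" "finite N'" using obtain_subset_with_card_n[OF cR] by blast
  have "N' \<noteq> {}" using N' n by auto
  then obtain a1 where a1: "a1\<in>N'" by blast
  define N where "N = insert a (insert b N')"
  have aN': "a\<notin>N'" "b\<notin>N'" using N' cf ijk unfolding M_def by auto
  have ab: "a\<noteq>b" using fab x by auto
  have cN: "card N = n-1" using N' aN' ab n unfolding N_def by simp
  have gN: "g\<in>N' \<Longrightarrow> g\<inter>a = {} \<and> g\<inter>b = {}" for g using N' T_def by auto
  have NN: "g1\<in>N' \<Longrightarrow> g2\<in>N' \<Longrightarrow> g1\<noteq>g2 \<Longrightarrow> g1\<inter>g2={}" for g1 g2
    using N' M_match[of i] unfolding matching_def by blast
  have mN: "matching E N"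
    unfolding matching_def N_def
  proof (intro conjI ballI impI)
    show "insert a (insert b N') \<subseteq> E" using N' fE M_def by auto
    fix e1 e2 assume e: "e1 \<in> insert a (insert b N')" "e2 \<in> insert a (insert b N')" "e1\<noteq>e2"
    show "e1\<inter>e2={}" using e fab gN NN by blast
  qed
  have msub: "Y \<subseteq> M l \<Longrightarrow> matching E Y" for Y l using M_match[of l] unfolding matching_def by blast
  define A1 where "A1 = M i - {a1}"
  define A2 where "A2 = M j - {a}"
  define A3 where "A3 = M k - {b}"
  have a1M: "a1 \<in> M i" using a1 N' by auto
  have kA: "k_matching E (n-1) A1" "k_matching E (n-1) A2" "k_matching E (n-1) A3"
    unfolding k_matching_def A1_def A2_def A3_def
    using msub[of "M i - {a1}" i] msub[of "M j - {a}" j] msub[of "M k - {b}" k]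
      card_Diff_singleton[OF a1M] card_Diff_singleton[OF fab(2)] card_Diff_singleton[OF fab(3)] cM
    by auto
  have kN: "k_matching E (n-1) N" unfolding k_matching_def using mN cN by simp
  have sub: "A1 \<subseteq> E" "A2 \<subseteq> E" "A3 \<subseteq> E" "N \<subseteq> E" using mN unfolding A1_def A2_def A3_def M_def matching_def by auto
  have cov: "E \<subseteq> A1 \<union> A2 \<union> A3 \<union> N"
  proof
    fix e assume e: "e\<in>E"
    have "c e < 3" using col e by auto
    then have "c e = i \<or> c e = j \<or> c e = k" using ijk by arith
    then show "e \<in> A1 \<union> A2 \<union> A3 \<union> N"
      using e a1 unfolding A1_def A2_def A3_def N_def M_def by auto
  qed
  have U: "\<Union>{A1,A2,A3,N} = E" using sub cov by auto
  have "card (set [A1,A2,A3,N]) \<le> 4" using card_length[of "[A1,A2,A3,N]"] by simp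
  hence "card {A1,A2,A3,N} \<le> 4" by simp
  thus ?thesis using U kA kN by (intro exI[of _ "{A1,A2,A3,N}"]) auto
qed

lemma two: "e\<in>E \<Longrightarrow> e'\<in>E \<Longrightarrow> u\<in>e \<Longrightarrow> v\<in>e \<Longrightarrow> u\<in>e' \<Longrightarrow> v\<in>e' \<Longrightarrow> u\<noteq>v \<Longrightarrow> e=e'"
proof -
  assume h: "e\<in>E" "e'\<in>E" "u\<in>e" "v\<in>e" "u\<in>e'" "v\<in>e'" "u\<noteq>v"
  obtain p q where "e={p,q}" using edge[OF h(1)] by blast
  moreover obtain p' q' where "e'={p',q'}" using edge[OF h(2)] by blast
  ultimately show "e=e'" using h by auto
qed

lemma loc: "e\<in>E \<Longrightarrow> u\<in>e \<Longrightarrow> e0\<in>E \<Longrightarrow> e1\<in>E \<Longrightarrow> e2\<in>E \<Longrightarrow> u\<in>e0 \<Longrightarrow> u\<in>e1 \<Longrightarrow> u\<in>e2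
  \<Longrightarrow> c e0=0 \<Longrightarrow> c e1=1 \<Longrightarrow> c e2=2 \<Longrightarrow> e=e0 \<or> e=e1 \<or> e=e2"
  using col3 uniq by metis

lemma config:
  assumes conn: "connected_graph V E" and cV: "card V \<ge> 8"
  shows "\<exists>f a b i j k. i<3 \<and> j<3 \<and> k<3 \<and> i\<noteq>j \<and> j\<noteq>k \<and> i\<noteq>k \<and> f\<in>M i \<and> a\<in>M j \<and> b\<in>M k
          \<and> a\<inter>b={} \<and> f\<inter>a\<noteq>{} \<and> f\<inter>b\<noteq>{}"
proof (rule ccontr)
  assume nc: "\<not> ?thesis"
  have G: "\<And>f a b i j k. i<3 \<Longrightarrow> j<3 \<Longrightarrow> k<3 \<Longrightarrow> i\<noteq>j \<Longrightarrow> j\<noteq>k \<Longrightarrow> i\<noteq>k \<Longrightarrow> f\<in>E \<Longrightarrow> c f = i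
     \<Longrightarrow> a\<in>E \<Longrightarrow> c a = j \<Longrightarrow> b\<in>E \<Longrightarrow> c b = k \<Longrightarrow> f\<inter>a\<noteq>{} \<Longrightarrow> f\<inter>b\<noteq>{} \<Longrightarrow> a\<inter>b\<noteq>{}"
    using nc unfolding M_def by blast
  have "V \<noteq> {}" using cV by auto
  then obtain x where xV: "x\<in>V" by blast
  obtain f where f: "f\<in>E" "x\<in>f" "c f = 0" using ex_col[OF xV, of 0] by auto
  obtain y where y: "y\<in>V" "y\<noteq>x" "f={x,y}" using edge_other[OF f(1,2)] by blast
  obtain a where a: "a\<in>E" "x\<in>a" "c a = 1" using ex_col[OF xV, of 1] by auto
  obtain b where b: "b\<in>E" "y\<in>b" "c b = 2" using ex_col[OF y(1), of 2] by auto
  obtain a' where a': "a'\<in>E" "x\<in>a'" "c a' = 2" using ex_col[OF xV, of 2] by auto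
  obtain b' where b': "b'\<in>E" "y\<in>b'" "c b' = 1" using ex_col[OF y(1), of 1] by auto
  have "a\<inter>b \<noteq> {}" using G[of 0 1 2 f a b] f a b y by auto
  then obtain z where z: "z\<in>a" "z\<in>b" by blast
  have zx: "z\<noteq>x" using two[OF b(1) f(1), of x y] z b f y by auto
  have zy: "z\<noteq>y" using two[OF a(1) f(1), of x y] z a f y by auto
  have aeq: "a = {x,z}" using edge_other[OF a(1,2)] z zx by auto
  have beq: "b = {y,z}" using edge_other[OF b(1,2)] z zy by auto
  have "a'\<inter>b' \<noteq> {}" using G[of 0 2 1 f a' b'] f a' b' y by auto
  then obtain w where w: "w\<in>a'" "w\<in>b'" by blast
  have wx: "w\<noteq>x" using two[OF b'(1) f(1), of x y] w b' f y by auto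
  have wy: "w\<noteq>y" using two[OF a'(1) f(1), of x y] w a' f y by auto
  have a'eq: "a' = {x,w}" using edge_other[OF a'(1,2)] w wx by auto
  have b'eq: "b' = {y,w}" using edge_other[OF b'(1,2)] w wy by auto
  have zw: "z\<noteq>w" using aeq b'eq zx zy y uniq[OF a(1) b'(1), of z] a b' w z by auto
  have zV: "z\<in>V" using edge_sub a z by auto
  obtain g where g: "g\<in>E" "z\<in>g" "c g = 0" using ex_col[OF zV, of 0] by auto
  obtain p where p: "p\<in>V" "p\<noteq>z" "g={z,p}" using edge_other[OF g(1,2)] by blast
  obtain h where h: "h\<in>E" "p\<in>h" "c h = 2" using ex_col[OF p(1), of 2] by auto
  have "a\<inter>h \<noteq> {}" using G[of 0 1 2 g a h] g a h p z by auto
  then obtain q where q: "q\<in>a" "q\<in>h" by blast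
  have pw: "p = w"
  proof (cases "q = z")
    case True
    then have "h = b" using uniq[OF h(1) b(1), of z] q h b z by auto
    then have "p = y" using h beq p by auto
    then have "g = b" using two[OF g(1) b(1), of z y] g p beq zy by auto
    then show ?thesis using g b by simp
  next
    case False
    then have "q = x" using q aeq by auto
    then have "h = a'" using uniq[OF h(1) a'(1), of x] q h a' by auto
    then have "p = x \<or> p = w" using h a'eq by auto
    moreover have "p \<noteq> x"
    proof
      assume "p = x"
      then have "g = a" using two[OF g(1) a(1), of z x] g p aeq zx by auto
      then show False using g a by simp
    qed
    ultimately show ?thesis by blast
  qed
  define K where "K = {x,y,z,w}"
  have fK: "f \<subseteq> K" "a \<subseteq> K" "b \<subseteq> K" "a' \<subseteq> K" "b' \<subseteq> K" "g \<subseteq> K"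
    unfolding K_def using y aeq beq a'eq b'eq p pw by auto
  have clo: "e\<in>E \<Longrightarrow> u\<in>K \<Longrightarrow> u\<in>e \<Longrightarrow> e\<subseteq>K" for e u
  proof -
    assume e: "e\<in>E" "u\<in>K" "u\<in>e"
    have "u = x \<or> u = y \<or> u = z \<or> u = w" using e K_def by auto
    moreover have "u = x \<Longrightarrow> ?thesis" using loc[OF e(1) e(3) f(1) a(1) a'(1)] f a a' fK by auto
    moreover have "u = y \<Longrightarrow> ?thesis" using loc[OF e(1) e(3) f(1) b'(1) b(1)] f b b' fK y by auto
    moreover have "u = z \<Longrightarrow> ?thesis" using loc[OF e(1) e(3) g(1) a(1) b(1)] g a b fK z by auto
    moreover have "u = w \<Longrightarrow> ?thesis" using loc[OF e(1) e(3) g(1) b'(1) a'(1)] g a' b' fK w p pw by auto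
    ultimately show ?thesis by blast
  qed
  have reach: "(adjacent E)\<^sup>*\<^sup>* x v \<Longrightarrow> v \<in> K" for v
  proof (induction rule: rtranclp_induct)
    case base then show ?case by (simp add: K_def)
  next
    case (step u v)
    then have "{u,v}\<in>E" by (simp add: adjacent_def)
    then show ?case using clo[of "{u,v}" u] step by auto
  qed
  have "V \<subseteq> K" using reach conn xV unfolding connected_graph_def by blast
  moreover have "card K \<le> 4"
  proof -
    have "card (set [x,y,z,w]) \<le> 4" using card_length[of "[x,y,z,w]"] by simp
    thus ?thesis by (simp add: K_def)
  qed
  ultimately have "card V \<le> 4" using card_mono[of K V] K_def by simp
  then show False using cV by simp
qed

end

theorem proposition3:
  fixes V :: "'a set" and E :: "'a set set" and n :: nat
  assumes "cubic_graph V E"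
    and "three_edge_colorable E"
    and "card V = 2 * n"
    and "2 * n \<ge> 8"
  shows "excessive_index E (n - 1) = 4"
proof -
  obtain c :: "'a set \<Rightarrow> nat" where c: "\<forall>e\<in>E. c e < 3"
    "\<forall>e1\<in>E. \<forall>e2\<in>E. e1 \<noteq> e2 \<and> e1 \<inter> e2 \<noteq> {} \<longrightarrow> c e1 \<noteq> c e2"
    using assms(2) unfolding three_edge_colorable_def by blast
  have cgr: "simple_graph V E" "connected_graph V E" "cubic V E" using assms(1) unfolding cubic_graph_def by auto
  interpret cg V E c using cgr c by unfold_locales auto
  have n4: "n \<ge> 4" using assms(4) by simp
  have cM: "card (M 0) = n" "card (M 1) = n" "card (M 2) = n" using card_M[of 0] card_M[of 1] card_M[of 2] assms(3) by simp_all
  have cE: "card E = 3*n" using card_E cM by simp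
  obtain f a b i j k where cfg: "i<3" "j<3" "k<3" "i\<noteq>j" "j\<noteq>k" "i\<noteq>k" "f\<in>M i" "a\<in>M j" "b\<in>M k"
      "a\<inter>b={}" "f\<inter>a\<noteq>{}" "f\<inter>b\<noteq>{}"
  proof -
    have "card V \<ge> 8" using assms(3,4) by simp
    from config[OF cgr(2) this] show ?thesis using that by blast
  qed
  obtain S0 where S0: "finite S0" "card S0 \<le> 4" "\<forall>X\<in>S0. k_matching E (n-1) X" "\<Union>S0 = E"
    using construct[OF assms(3) n4 cfg] by blast
  define P where "P t = (\<exists>S. finite S \<and> card S = t \<and> (\<forall>M\<in>S. k_matching E (n - 1) M) \<and> \<Union>S = E)" for t
  have lower: "P t \<Longrightarrow> 4 \<le> t" for t
  proof -
    assume "P t"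
    then obtain S where S: "finite S" "card S = t" "\<forall>M\<in>S. k_matching E (n - 1) M" "\<Union>S = E"
      unfolding P_def by blast
    have "card E \<le> sum card S" using card_Union_le_sum_card[of S] S by simp
    also have "sum card S = sum (\<lambda>_. n-1) S" using S(3) unfolding k_matching_def by simp
    also have "... = t * (n-1)" using S by simp
    finally have le: "3*n \<le> t*(n-1)" using cE by simp
    show "4 \<le> t"
    proof (rule ccontr)
      assume "\<not> 4 \<le> t"
      then have "t \<le> 3" by simp
      then have m: "t*(n-1) \<le> 3*(n-1)" by (rule mult_le_mono1)
      have "3*(n-1) < 3*n" using n4 by simp
      then show False using le m by linarith
    qed
  qed
  have P0: "P (card S0)" unfolding P_def using S0 by blast
  have cond: "\<forall>e\<in>E. \<exists>M. k_matching E (n - 1) M \<and> e \<in> M" using S0 by blast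
  have "(LEAST t. P t) \<le> card S0" using P0 by (rule Least_le)
  moreover have "4 \<le> (LEAST t. P t)" using lower LeastI[of P, OF P0] by blast
  ultimately have L: "(LEAST t. P t) = 4" using S0 by simp
  show ?thesis unfolding excessive_index_def using cond L P_def by (simp add: numeral_eq_enat)
qed

end
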